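(* The number of $\mathbb{F}_q$-linear automorphisms of $\mathbb{F}_{q^m}$ that are fully linear over $\mathbb{F}_{q^m}$ is exactly $m(q^m-1)$.
   Context: $q$ is a prime power (the paper takes $q$ a power of $2$). An $\mathbb{F}_q$-linear automorphism of $\mathbb{F}_{q^m}$ is a bijective $\mathbb{F}_q$-linear map $\varphi:\mathbb{F}_{q^m}\to\mathbb{F}_{q^m}$, applied componentwise to vectors. For an $\mathbb{F}_{q^m}$-linear code $\mathcal{C}\subseteq\mathbb{F}_{q^m}^n$, $\varphi$ is linear on $\mathcal{C}$ if $\varphi(\mathcal{C})=\{\varphi(\bm{c}):\bm{c}\in\mathcal{C}\}$ is an $\mathbb{F}_{q^m}$-linear subspace. $\varphi$ is fully linear over $\mathbb{F}_{q^m}$ if it is linear on every $\mathbb{F}_{q^m}$-linear code of every length $n\ge1$. *)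

theory Defs
  imports Main
begin

text \<open>A subfield K of the ambient field (playing the role of F_q inside F_{q^m}).\<close>
definition is_subfield :: "'a::field set \<Rightarrow> bool" where
  "is_subfield K \<longleftrightarrow> 0 \<in> K \<and> 1 \<in> K \<and>
     (\<forall>x\<in>K. \<forall>y\<in>K. x + y \<in> K \<and> x * y \<in> K) \<and>
     (\<forall>x\<in>K. - x \<in> K) \<and> (\<forall>x\<in>K. x \<noteq> 0 \<longrightarrow> inverse x \<in> K)"

definition lin_aut :: "'a::field set \<Rightarrow> ('a \<Rightarrow> 'a) \<Rightarrow> bool" where
  "lin_aut K phi \<longleftrightarrow> bij phi \<and>
     (\<forall>x y. phi (x + y) = phi x + phi y) \<and>
     (\<forall>c\<in>K. \<forall>x. phi (c * x) = c * phi x)"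

definition lin_code :: "nat \<Rightarrow> 'a::field list set \<Rightarrow> bool" where
  "lin_code n C \<longleftrightarrow> C \<subseteq> {v. length v = n} \<and> replicate n 0 \<in> C \<and>
     (\<forall>u\<in>C. \<forall>v\<in>C. map2 (+) u v \<in> C) \<and>
     (\<forall>a. \<forall>u\<in>C. map ((*) a) u \<in> C)"

definition linear_on_code :: "nat \<Rightarrow> ('a::field \<Rightarrow> 'a) \<Rightarrow> 'a list set \<Rightarrow> bool" where
  "linear_on_code n phi C \<longleftrightarrow> lin_code n (map phi ` C)"

definition fully_linear :: "('a::field \<Rightarrow> 'a) \<Rightarrow> bool" where
  "fully_linear phi \<longleftrightarrow>
     (\<forall>n\<ge>1. \<forall>C. lin_code n C \<longrightarrow> linear_on_code n phi C)"

end

theory Submission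
  imports Defs "HOL-Computational_Algebra.Computational_Algebra" "HOL-Number_Theory.Cong"
    "HOL-Algebra.Multiplicative_Group"
begin

definition ring_of_tyf :: "'a::field ring"
  where "ring_of_tyf = \<lparr>
    carrier = UNIV, monoid.mult = (\<lambda>x y. x * y),
    one = 1,
    ring.zero = 0,
    add = (\<lambda> x y. x + y) \<rparr>"

lemma field_of_tyf: "field (ring_of_tyf :: 'a::field ring)"
proof -
  have "\<exists>y. x + y = 0" for x :: 'a
    using add.right_inverse by blast
  moreover have "x \<noteq> 0 \<Longrightarrow> \<exists>y. x * y = 1" for x :: 'a
    by (rule exI[of _ "inverse x"]) auto
  ultimately show ?thesis
    unfolding ring_of_tyf_def using add.right_inverse
    by unfold_locales (auto simp:algebra_simps Units_def)
qed

lemma gen_exists: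
  fixes dummy :: "'a::{field,finite}"
  shows "\<exists>a::'a. a \<noteq> 0 \<and> (\<forall>x::'a. x \<noteq> 0 \<longrightarrow> (\<exists>i::nat. x = a ^ i))"
proof -
  let ?R = "ring_of_tyf :: 'a ring"
  interpret R: field ?R by (rule field_of_tyf)
  have fin: "finite (carrier ?R)" by simp
  obtain a where a: "a \<in> carrier (mult_of ?R)" and c: "carrier (mult_of ?R) = {a[^]\<^bsub>?R\<^esub> i | i::nat . i \<in> UNIV}"
    using R.finite_field_mult_group_has_gen[OF fin] by auto
  have pw: "a [^]\<^bsub>?R\<^esub> (i::nat) = a ^ i" for i
    by (induction i) (auto simp: ring_of_tyf_def)
  show ?thesis
  proof (intro exI[of _ a] conjI allI impI)
    show "a \<noteq> 0" using a by (auto simp: ring_of_tyf_def)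
    fix x :: 'a assume "x \<noteq> 0"
    hence "x \<in> carrier (mult_of ?R)" by (auto simp: ring_of_tyf_def)
    thus "\<exists>i. x = a ^ i" using c pw by auto
  qed
qed

definition fieldaut :: "'a::field set \<Rightarrow> ('a \<Rightarrow> 'a) \<Rightarrow> bool" where
 "fieldaut K s \<longleftrightarrow> bij s \<and> (\<forall>x y. s (x+y) = s x + s y) \<and> (\<forall>x y. s (x*y) = s x * s y) \<and> (\<forall>k\<in>K. s k = k)"

lemma additive_0:
  assumes "\<forall>x y. f (x+y) = f x + f (y::'a::ab_group_add)"
  shows "f 0 = (0::'b::ab_group_add) \<or> True"
  by simp

lemma add_hom_0:
  fixes f :: "'a::ab_group_add \<Rightarrow> 'b::ab_group_add"
  assumes "\<And>x y. f (x+y) = f x + f y"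
  shows "f 0 = 0"
proof -
  have "f (0+0) = f 0 + f 0" by (rule assms)
  thus ?thesis by simp
qed

lemma bij_mult_const:
  fixes c :: "'a::field"
  assumes "c \<noteq> 0" shows "bij (\<lambda>y. c * y)"
proof (rule bijI)
  show "inj (\<lambda>y. c * y)" using assms by (auto simp: inj_def)
  show "surj (\<lambda>y. c * y)" unfolding surj_def
  proof
    fix y show "\<exists>x. y = c * x" by (rule exI[of _ "y/c"]) (use assms in simp)
  qed
qed

lemma line_code: "lin_code 2 {[x, x*a] | x::'a::field. True}"
  unfolding lin_code_def
proof (intro conjI ballI allI)
  show "{[x, x*a] | x::'a. True} \<subseteq> {v. length v = 2}" by auto
  show "replicate 2 0 \<in> {[x, x*a] | x::'a. True}" by (auto simp: numeral_2_eq_2)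
next
  fix u v assume "u \<in> {[x, x*a] | x::'a. True}" "v \<in> {[x, x*a] | x::'a. True}"
  then obtain x y where "u = [x, x*a]" "v = [y,y*a]" by blast
  thus "map2 (+) u v \<in> {[x, x*a] | x::'a. True}" by (auto simp: algebra_simps)
next
  fix b u assume "u \<in> {[x, x*a] | x::'a. True}"
  then obtain x where "u = [x, x*a]" by blast
  thus "map ((*) b) u \<in> {[x, x*a] | x::'a. True}" by (auto simp: algebra_simps)
qed

lemma full_imp_form:
  fixes phi :: "'a::field \<Rightarrow> 'a"
  assumes la: "lin_aut K phi" and fl: "fully_linear phi" and K: "is_subfield K"
  shows "\<exists>c s. c \<noteq> 0 \<and> fieldaut K s \<and> phi = (\<lambda>x. c * s x)"
proof -
  have bij: "bij phi" and add: "\<And>x y. phi (x+y) = phi x + phi y" and kl: "\<And>k x. k \<in> K \<Longrightarrow> phi (k*x) = k * phi x"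
    using la by (auto simp: lin_aut_def)
  have p0: "phi 0 = 0" by (rule add_hom_0) (rule add)
  define c where "c = phi 1"
  have c0: "c \<noteq> 0"
  proof
    assume "c = 0"
    hence "phi 1 = phi 0" using p0 c_def by simp
    with bij have "(1::'a) = 0" by (metis bij_def inj_eq)
    thus False by simp
  qed
  have mult: "phi (x * a) * c = phi x * phi a" for x a
  proof -
    let ?C = "{[x, x*a] | x::'a. True}"
    have "lin_code 2 (map phi ` ?C)"
      using fl line_code[of a] unfolding fully_linear_def linear_on_code_def by auto
    hence sc: "\<forall>b. \<forall>u\<in>map phi ` ?C. map ((*) b) u \<in> map phi ` ?C" unfolding lin_code_def by blast
    have "[1, 1*a] \<in> ?C" by blast
    from imageI[OF this, of "map phi"] have mem1: "[phi 1, phi (1*a)] \<in> map phi ` ?C" by simp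
    have "map ((*) (phi x / c)) [phi 1, phi (1*a)] \<in> map phi ` ?C" using bspec[OF spec[OF sc, of "phi x / c"] mem1] .
    then obtain y where y: "[phi x / c * phi 1, phi x / c * phi (1*a)] = [phi y, phi (y*a)]" by fastforce
    hence "phi y = phi x" using c0 by (simp add: c_def)
    hence "y = x" using bij by (metis bij_def inj_eq)
    with y show ?thesis using c0 by (simp add: field_simps)
  qed
  define s where "s x = phi x / c" for x
  have "fieldaut K s"
    unfolding fieldaut_def
  proof (intro conjI allI ballI)
    show "bij s"
    proof -
      have "s = (\<lambda>y. y / c) \<circ> phi" by (auto simp: s_def)
      moreover have "bij (\<lambda>y::'a. y / c)"
        using bij_mult_const[of "inverse c"] c0 by (simp add: divide_inverse mult.commute)
      ultimately show ?thesis using bij bij_comp by metis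
    qed
    fix x y show "s (x+y) = s x + s y" by (simp add: s_def add add_divide_distrib)
    show "s (x*y) = s x * s y" using mult[of x y] c0 by (simp add: s_def field_simps)
  next
    fix k assume "k \<in> K" thus "s k = k" using kl[of k 1] c0 by (simp add: s_def c_def)
  qed
  moreover have "phi = (\<lambda>x. c * s x)" using c0 by (auto simp: s_def)
  ultimately show ?thesis using c0 by blast
qed

lemma form_imp_full:
  fixes s :: "'a::field \<Rightarrow> 'a"
  assumes s: "fieldaut K s" and c0: "c \<noteq> 0"
  shows "lin_aut K (\<lambda>x. c * s x) \<and> fully_linear (\<lambda>x. c * s x)"
proof -
  have bij: "bij s" and add: "\<And>x y. s (x+y) = s x + s y" and mul: "\<And>x y. s (x*y) = s x * s y"
    and fx: "\<And>k. k \<in> K \<Longrightarrow> s k = k"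
    using s by (auto simp: fieldaut_def)
  have s0: "s 0 = 0" by (rule add_hom_0) (rule add)
  let ?phi = "\<lambda>x. c * s x"
  have "lin_aut K ?phi"
    unfolding lin_aut_def
  proof (intro conjI allI ballI)
    have "bij (\<lambda>y::'a. c * y)" using bij_mult_const c0 by blast
    hence "bij ((\<lambda>y. c * y) \<circ> s)" using bij bij_comp by blast
    thus "bij ?phi" by (simp add: o_def)
    fix x y show "c * s (x+y) = c * s x + c * s y" by (simp add: add distrib_left)
  next
    fix k x assume "k \<in> K" thus "c * s (k*x) = k * (c * s x)" by (simp add: mul fx)
  qed
  moreover have "fully_linear ?phi"
    unfolding fully_linear_def linear_on_code_def
  proof (intro allI impI)
    fix n :: nat and C :: "'a list set"
    assume "1 \<le> n" and C: "lin_code n C"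
    show "lin_code n (map ?phi ` C)"
      unfolding lin_code_def
    proof (intro conjI ballI allI)
      show "map ?phi ` C \<subseteq> {v. length v = n}" using C by (auto simp: lin_code_def)
      have "map ?phi (replicate n 0) = replicate n 0" by (simp add: s0)
      thus "replicate n 0 \<in> map ?phi ` C" using C unfolding lin_code_def by force
    next
      fix u v assume "u \<in> map ?phi ` C" "v \<in> map ?phi ` C"
      then obtain u' v' where u': "u' \<in> C" "u = map ?phi u'" and v': "v' \<in> C" "v = map ?phi v'" by auto
      have "map2 (+) u v = map ?phi (map2 (+) u' v')"
        by (simp add: u' v' zip_map_map add distrib_left case_prod_beta)
      moreover have "map2 (+) u' v' \<in> C" using C u' v' by (auto simp: lin_code_def)
      ultimately show "map2 (+) u v \<in> map ?phi ` C" by blast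
    next
      fix b u assume "u \<in> map ?phi ` C"
      then obtain u' where u': "u' \<in> C" "u = map ?phi u'" by auto
      have sb: "s (inv_into UNIV s b) = b" using bij by (meson bij_inv_eq_iff)
      have "map ((*) b) u = map ?phi (map ((*) (inv_into UNIV s b)) u')"
        by (simp add: u' mul sb)
      moreover have "map ((*) (inv_into UNIV s b)) u' \<in> C" using C u' by (auto simp: lin_code_def)
      ultimately show "map ((*) b) u \<in> map ?phi ` C" by blast
    qed
  qed
  ultimately show ?thesis by blast
qed


lemma char_prime: "Factorial_Ring.prime CHAR('a::{field,finite})"
  by (rule prime_CHAR_semidom) (rule finite_imp_CHAR_pos, simp)

lemma of_nat_mod_CHAR: "(of_nat (a mod CHAR('a)) :: 'a::semiring_1) = of_nat a"
proof -
  have "(of_nat a :: 'a) = of_nat (a mod CHAR('a) + CHAR('a) * (a div CHAR('a)))" by simp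
  also have "\<dots> = of_nat (a mod CHAR('a))" by (simp only: of_nat_add of_nat_mult of_nat_CHAR) simp
  finally show ?thesis by simp
qed

lemma nat_mult_mem:
  fixes S :: "'a::ring_1 set"
  assumes "0 \<in> S" "\<forall>x\<in>S. \<forall>y\<in>S. x+y \<in> S" "x \<in> S"
  shows "of_nat k * x \<in> S"
  by (induction k) (use assms in \<open>auto simp: algebra_simps\<close>)

lemma neg_mem:
  fixes S :: "'a::{field,finite} set"
  assumes "0 \<in> S" "\<forall>x\<in>S. \<forall>y\<in>S. x+y \<in> S" "x \<in> S"
  shows "- x \<in> S"
proof -
  let ?p = "CHAR('a)"
  have p: "?p > 0" using char_prime prime_gt_0_nat by blast
  have "of_nat (?p - 1) * x + x = of_nat (Suc (?p - 1)) * x" by (simp add: algebra_simps)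
  also have "Suc (?p - 1) = ?p" using p by simp
  finally have "of_nat (?p - 1) * x = - x" by (simp add: eq_neg_iff_add_eq_0)
  with nat_mult_mem[OF assms, of "?p - 1"] show ?thesis by simp
qed

lemma card_char_pow_aux:
  fixes K :: "'a::{field,finite} set"
  assumes K0: "0 \<in> K" and Kc: "\<forall>x\<in>K. \<forall>y\<in>K. x+y \<in> K"
  shows "0 \<in> S \<Longrightarrow> (\<forall>x\<in>S. \<forall>y\<in>S. x+y \<in> S) \<Longrightarrow> S \<subseteq> K \<Longrightarrow> \<exists>j. card K = card S * CHAR('a) ^ j"
proof (induction "card K - card S" arbitrary: S rule: less_induct)
  case less
  let ?p = "CHAR('a)"
  have pr: "Factorial_Ring.prime ?p" by (rule char_prime)
  hence p1: "?p > 1" using prime_gt_1_nat by blast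
  show ?case
  proof (cases "S = K")
    case True thus ?thesis by (intro exI[of _ 0]) simp
  next
    case False
    then obtain x where x: "x \<in> K" "x \<notin> S" using less.prems by blast
    define T where "T = (\<lambda>(s,j). s + of_nat j * x) ` (S \<times> {..<?p})"
    have TK: "T \<subseteq> K"
      using less.prems nat_mult_mem[OF K0 Kc x(1)] Kc by (auto simp: T_def)
    have T0: "0 \<in> T" unfolding T_def using less.prems p1 by (auto intro!: image_eqI[of _ _ "(0,0)"])
    have Tc: "\<forall>a\<in>T. \<forall>b\<in>T. a+b \<in> T"
    proof (intro ballI)
      fix a b assume "a \<in> T" "b \<in> T"
      then obtain s j s' j' where a: "a = s + of_nat j * x" "s \<in> S" and b: "b = s' + of_nat j' * x" "s' \<in> S"
        unfolding T_def by auto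
      have "a + b = (s + s') + of_nat ((j + j') mod ?p) * x"
        by (simp add: a b of_nat_mod_CHAR algebra_simps)
      moreover have "s + s' \<in> S" using less.prems a b by auto
      moreover have "(j + j') mod ?p < ?p" using p1 by simp
      ultimately show "a + b \<in> T" unfolding T_def by (auto intro!: image_eqI[of _ _ "(s+s', (j + j') mod ?p)"])
    qed
    have xT: "x \<in> T" unfolding T_def using less.prems p1 by (auto intro!: image_eqI[of _ _ "(0,1)"])
    have p0: "0 < ?p" using p1 by simp
    have key: "j = j'" if "s \<in> S" "s' \<in> S" "j < ?p" "j' < ?p" "j' \<le> j"
       "s + of_nat j * x = s' + of_nat j' * x" for s s' j j'
    proof (rule ccontr)
      assume ne: "j \<noteq> j'"
      define d where "d = j - j'"
      have d: "0 < d" "d < ?p" using that ne by (auto simp: d_def)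
      have "of_nat d * x = s' + - s" using that by (simp add: d_def of_nat_diff algebra_simps)
      moreover have "s' + - s \<in> S" using neg_mem[of S s] less.prems that by auto
      ultimately have dS: "of_nat d * x \<in> S" by simp
      have "\<not> ?p dvd d" using d by (auto dest: dvd_imp_le)
      hence "coprime d ?p" using prime_imp_coprime[OF pr] by (simp add: coprime_commute)
      then obtain d' where "[d * d' = Suc 0] (mod ?p)" using cong_solve_coprime_nat by blast
      hence "(d * d') mod ?p = 1" using p1 by (simp add: cong_def)
      hence "(of_nat (d * d') :: 'a) = 1" by (metis of_nat_mod_CHAR of_nat_1)
      hence "of_nat d' * (of_nat d * x) = x" by (metis mult.assoc mult.commute mult_1 of_nat_mult)
      moreover have "of_nat d' * (of_nat d * x) \<in> S" using nat_mult_mem[OF _ _ dS] less.prems by auto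
      ultimately show False using x by metis
    qed
    have inj: "inj_on (\<lambda>(s,j). s + of_nat j * x) (S \<times> {..<?p})"
    proof (rule inj_onI, clarsimp)
      fix s j s' j' assume h: "s \<in> S" "j < ?p" "s' \<in> S" "j' < ?p" "s + of_nat j * x = s' + of_nat j' * x"
      have "j = j'"
      proof (cases "j' \<le> j")
        case True thus ?thesis using key h by blast
      next
        case False thus ?thesis using key[of s' s j' j] h by auto
      qed
      thus "s = s' \<and> j = j'" using h by simp
    qed
    have fin: "finite S" by simp
    have cT: "card T = card S * ?p"
      unfolding T_def by (simp add: card_image[OF inj] card_cartesian_product)
    have cS: "card S > 0" using less.prems by (auto simp: card_gt_0_iff)
    have "card S < card T" using cT cS p1 by simp
    moreover have "card T \<le> card K" using TK by (simp add: card_mono)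
    ultimately have "card K - card T < card K - card S" by simp
    then obtain j where "card K = card T * ?p ^ j" using less.hyps[OF _ T0 Tc TK] by blast
    thus ?thesis using cT by (intro exI[of _ "Suc j"]) (simp add: mult.assoc)
  qed
qed

lemma card_char_pow:
  fixes K :: "'a::{field,finite} set"
  assumes K0: "0 \<in> K" and Kc: "\<forall>x\<in>K. \<forall>y\<in>K. x+y \<in> K"
  shows "\<exists>j. card K = CHAR('a) ^ j"
  using card_char_pow_aux[OF assms, of "{0}"] K0 by simp


definition rhom :: "('a::comm_ring_1 \<Rightarrow> 'a) \<Rightarrow> bool" where
  "rhom h \<longleftrightarrow> h 0 = 0 \<and> h 1 = 1 \<and> (\<forall>x y. h (x+y) = h x + h y) \<and> (\<forall>x y. h (x*y) = h x * h y)"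

lemma rhom_sum: "rhom h \<Longrightarrow> h (sum f A) = sum (\<lambda>i. h (f i)) A"
  by (induction A rule: infinite_finite_induct) (auto simp: rhom_def)

lemma rhom_minus: "rhom h \<Longrightarrow> h (- x) = - h x"
proof -
  assume r: "rhom h"
  have "h (-x + x) = h (- x) + h x" using r unfolding rhom_def by blast
  moreover have "h (-x + x) = 0" using r by (simp add: rhom_def)
  ultimately show ?thesis by (simp add: eq_neg_iff_add_eq_0)
qed

lemma rhom_power: "rhom h \<Longrightarrow> h (x ^ n) = h x ^ n"
  by (induction n) (auto simp: rhom_def)

lemma map_poly_rhom_mult:
  assumes "rhom h" shows "map_poly h (p * r) = map_poly h p * map_poly h r"
proof (rule poly_eqI)
  fix n
  have h0: "h 0 = 0" using assms by (simp add: rhom_def)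
  show "Polynomial.coeff (map_poly h (p * r)) n = Polynomial.coeff (map_poly h p * map_poly h r) n"
    using assms by (simp add: coeff_map_poly[where f=h, OF h0] coeff_mult rhom_sum) (simp add: rhom_def)
qed

lemma map_poly_rhom_prod:
  assumes "rhom h" shows "map_poly h (\<Prod>i\<in>A. f i) = (\<Prod>i\<in>A. map_poly h (f i))"
proof (induction A rule: infinite_finite_induct)
  case (insert x F) thus ?case by (simp add: map_poly_rhom_mult[OF assms])
qed (use assms in \<open>auto simp: rhom_def\<close>)

lemma poly_map_poly_rhom:
  assumes "rhom h" shows "poly (map_poly h p) (h x) = h (poly p x)"
proof (induction p)
  case 0 thus ?case using assms by (simp add: rhom_def)
next
  case (pCons a p)
  have h0: "h 0 = 0" using assms by (simp add: rhom_def)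
  show ?case using pCons assms by (simp add: map_poly_pCons[where f=h, OF h0] rhom_def)
qed

lemma lin_map_poly_rhom:
  assumes "rhom h" shows "map_poly h [:a, b:] = [:h a, h b:]"
proof -
  have h0: "h 0 = 0" using assms by (simp add: rhom_def)
  show ?thesis by (simp add: map_poly_pCons[where f=h, OF h0])
qed

lemma pow_card_subset:
  fixes K :: "'a::field set"
  assumes fin: "finite K" and K0: "0 \<in> K" and Km: "\<forall>x\<in>K. \<forall>y\<in>K. x*y \<in> K"
    and Ki: "\<forall>x\<in>K. x \<noteq> 0 \<longrightarrow> inverse x \<in> K" and x: "x \<in> K"
  shows "x ^ card K = x"
proof (cases "x = 0")
  case True
  have "card K > 0" using fin K0 by (auto simp: card_gt_0_iff)
  thus ?thesis using True by simp
next
  case False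
  let ?A = "K - {0}"
  have cK: "card K = Suc (card ?A)" using fin K0 card_Suc_Diff1 by metis
  have "(\<Prod>y\<in>?A. x * y) = x ^ card ?A * \<Prod>?A" by (simp add: prod.distrib)
  moreover have "(\<Prod>y\<in>?A. x * y) = (\<Prod>y\<in>?A. y)"
    by (rule prod.reindex_bij_witness[of _ "\<lambda>y. y / x" "\<lambda>y. x * y"])
       (use False Km Ki x in \<open>auto simp: divide_inverse mult.commute\<close>)
  moreover have "\<Prod>?A \<noteq> 0" using fin by simp
  ultimately have "x ^ card ?A = 1" by simp
  thus ?thesis using cK by simp
qed

lemma pow_card_univ: "(x::'a::{field,finite}) ^ card (UNIV::'a set) = x"
  by (rule pow_card_subset) auto

lemma roots_card_bound:
  fixes n :: nat
  assumes "n \<ge> 2"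
  shows "card {x::'a::field. x ^ n = x} \<le> n"
proof -
  define P :: "'a poly" where "P = Polynomial.monom 1 n - [:0,1:]"
  have "Polynomial.coeff [:0,(1::'a):] n = 0" using assms by (auto simp: coeff_pCons split: nat.splits)
  hence "Polynomial.coeff P n = 1" using assms by (simp add: P_def)
  hence P0: "P \<noteq> 0" by auto
  have "degree P \<le> n"
    unfolding P_def using assms
    by (intro degree_diff_le) (auto intro: degree_monom_le order.trans[OF degree_pCons_le])
  moreover have "{x. x ^ n = x} = {x. poly P x = 0}" by (auto simp: P_def poly_monom)
  ultimately show ?thesis using card_poly_roots_bound[OF P0] by simp
qed


lemma fieldaut_rhom: "fieldaut K s \<Longrightarrow> rhom s"
proof -
  assume a: "fieldaut K s"
  hence bij: "bij s" and add: "\<And>x y. s (x+y) = s x + s y" and mul: "\<And>x y. s (x*y) = s x * s y"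
    by (auto simp: fieldaut_def)
  have s0: "s 0 = 0" by (rule add_hom_0) (rule add)
  have "s 1 \<noteq> 0" using bij s0 by (metis bij_def inj_eq one_neq_zero)
  moreover have "s 1 = s 1 * s 1" using mul[of 1 1] by simp
  ultimately have "s 1 = 1" by simp
  thus "rhom s" using s0 add mul by (simp add: rhom_def)
qed

lemma count_aut:
  fixes K :: "'a::{field,finite} set" and q m :: nat
  assumes K: "is_subfield K" and cK: "card K = q" and cU: "card (UNIV :: 'a set) = q ^ m"
  shows "card {s. fieldaut K s} = m"
proof -
  have fin: "finite K" by simp
  from K have K0: "0 \<in> K" "1 \<in> K" and Ka: "\<forall>x\<in>K. \<forall>y\<in>K. x+y\<in>K" and Km: "\<forall>x\<in>K. \<forall>y\<in>K. x*y \<in> K"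
    and Ki: "\<forall>x\<in>K. x \<noteq> 0 \<longrightarrow> inverse x \<in> K"
    unfolding is_subfield_def by auto
  have "card {0::'a, 1} \<le> card K" using K0 by (intro card_mono) auto
  hence q2: "q \<ge> 2" using cK by simp
  have "card K \<le> card (UNIV::'a set)" by (rule card_mono) auto
  hence m0: "m > 0" using q2 cK cU by (cases m) auto
  let ?p = "CHAR('a)"
  obtain e where qe: "q = ?p ^ e" using card_char_pow[OF K0(1) Ka] cK by metis
  have pr: "Factorial_Ring.prime ?p" by (rule char_prime)
  have Kpow: "k ^ q = k" if "k \<in> K" for k
    using pow_card_subset[OF fin K0(1) Km Ki that] cK by simp
  have Kpowi: "k ^ (q ^ i) = k" if "k \<in> K" for k i
  proof (induction i)
    case (Suc i) thus ?case by (simp add: power_mult Kpow that mult.commute)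
  qed simp
  have fr_rhom: "rhom (\<lambda>x::'a. x ^ (q ^ i))" for i
  proof -
    have qi: "q ^ i = ?p ^ (e * i)" by (simp add: qe power_mult)
    have "(x + y) ^ (q ^ i) = x ^ (q ^ i) + y ^ (q ^ i)" for x y :: 'a
      by (rule freshmans_dream'[OF pr qi])
    moreover have "q ^ i > 0" using q2 by simp
    ultimately show ?thesis by (simp add: rhom_def power_mult_distrib)
  qed
  have fr_inj: "inj (\<lambda>x::'a. x ^ (q ^ i))" for i
  proof (rule injI)
    fix x y :: 'a assume h: "x ^ (q ^ i) = y ^ (q ^ i)"
    have "(x - y + y) ^ (q ^ i) = (x - y) ^ (q ^ i) + y ^ (q ^ i)"
      using fr_rhom[of i] unfolding rhom_def by blast
    hence "(x - y) ^ (q ^ i) = 0" using h by simp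
    thus "x = y" by simp
  qed
  have fr_aut: "fieldaut K (\<lambda>x::'a. x ^ (q ^ i))" for i
  proof -
    have "bij (\<lambda>x::'a. x ^ (q ^ i))" using fr_inj[of i] finite_UNIV_inj_surj[of "\<lambda>x::'a. x ^ (q ^ i)"]
      by (simp add: bij_def)
    thus ?thesis using fr_rhom[of i] Kpowi by (simp add: fieldaut_def rhom_def)
  qed
  have fr_distinct: "inj_on (\<lambda>i. (\<lambda>x::'a. x ^ (q ^ i))) {..<m}"
  proof -
    have False if ij: "i < j" "j < m" and eq: "(\<lambda>x::'a. x ^ (q ^ i)) = (\<lambda>x. x ^ (q ^ j))" for i j
    proof -
      define d where "d = j - i"
      have allx: "x ^ (q ^ d) = x" for x :: 'a
      proof -
        have "(x ^ (q ^ d)) ^ (q ^ i) = x ^ (q ^ j)"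
          using ij by (simp add: d_def flip: power_mult power_add)
        also have "\<dots> = x ^ (q ^ i)" using eq by metis
        finally show ?thesis using fr_inj[of i] unfolding inj_def by blast
      qed
      have "q ^ d \<ge> q ^ 1" using q2 ij by (intro power_increasing) (auto simp: d_def)
      hence "q ^ d \<ge> 2" using q2 by simp
      hence "card {x::'a. x ^ (q ^ d) = x} \<le> q ^ d" by (rule roots_card_bound)
      moreover have "{x::'a. x ^ (q ^ d) = x} = UNIV" using allx by auto
      moreover have "q ^ d < q ^ m" using q2 ij d_def by (intro power_strict_increasing) auto
      ultimately show False using cU by simp
    qed
    thus ?thesis unfolding inj_on_def by (metis lessThan_iff linorder_neqE_nat)
  qed
  have fixedK: "x \<in> K" if "x ^ q = x" for x :: 'a
  proof -
    have sub: "K \<subseteq> {x::'a. x ^ q = x}" using Kpow by auto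
    have "card {x::'a. x ^ q = x} \<le> card K" using roots_card_bound[OF q2] cK by simp
    hence "K = {x::'a. x ^ q = x}" using sub card_subset_eq[OF _ sub] card_mono[OF _ sub] by (metis finite le_antisym)
    thus ?thesis using that by auto
  qed
  obtain \<alpha> :: 'a where a0: "\<alpha> \<noteq> 0" and gen: "\<And>x. x \<noteq> 0 \<Longrightarrow> \<exists>j::nat. x = \<alpha> ^ j"
    using gen_exists by blast
  define h where "h i = [:- (\<alpha> ^ (q ^ i)), 1:]" for i
  define g where "g = (\<Prod>i<m. h i)"
  have fr1: "rhom (\<lambda>x::'a. x ^ q)" using fr_rhom[of 1] by simp
  have mapg: "map_poly (\<lambda>x::'a. x ^ q) g = g"
  proof -
    have hS: "map_poly (\<lambda>x::'a. x ^ q) (h i) = h (Suc i)" for i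
      using lin_map_poly_rhom[OF fr1] rhom_minus[OF fr1] fr1
      by (simp add: h_def rhom_def power_mult[symmetric] mult.commute)
    have "map_poly (\<lambda>x::'a. x ^ q) g = (\<Prod>i<m. h (Suc i))"
      by (simp add: g_def map_poly_rhom_prod[OF fr1] hS)
    also have "\<dots> = g"
    proof -
      have hm: "h m = h 0" using pow_card_univ[of \<alpha>] cU by (simp add: h_def)
      have "h 0 * (\<Prod>i<m. h (Suc i)) = (\<Prod>i<m. h i) * h m"
        by (simp only: prod.lessThan_Suc_shift[symmetric] prod.lessThan_Suc)
      also have "\<dots> = h 0 * (\<Prod>i<m. h i)" using hm by (simp add: mult.commute)
      finally have "h 0 * (\<Prod>i<m. h (Suc i)) = h 0 * (\<Prod>i<m. h i)" .
      moreover have "h 0 \<noteq> 0" by (simp add: h_def)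
      ultimately show ?thesis by (simp add: g_def)
    qed
    finally show ?thesis .
  qed
  have coefK: "Polynomial.coeff g k \<in> K" for k
  proof (rule fixedK)
    have z: "(0::'a) ^ q = 0" using q2 by simp
    have "Polynomial.coeff (map_poly (\<lambda>x::'a. x ^ q) g) k = Polynomial.coeff g k ^ q"
      by (rule coeff_map_poly[where f = "\<lambda>x::'a. x ^ q", OF z])
    thus "Polynomial.coeff g k ^ q = Polynomial.coeff g k" using mapg by simp
  qed
  have ga: "poly g \<alpha> = 0"
    using m0 by (auto simp: g_def h_def poly_prod intro!: bexI[of _ 0])
  have upper: "\<exists>i<m. s = (\<lambda>x. x ^ (q ^ i))" if s: "fieldaut K s" for s
  proof -
    have rs: "rhom s" by (rule fieldaut_rhom[OF s])
    have fixs: "\<And>k. k \<in> K \<Longrightarrow> s k = k" using s by (simp add: fieldaut_def)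
    have s0: "s 0 = 0" using rs by (simp add: rhom_def)
    have "map_poly s g = g"
      by (rule poly_eqI) (simp add: coeff_map_poly[where f = s, OF s0] fixs coefK)
    hence "poly g (s \<alpha>) = 0" using poly_map_poly_rhom[OF rs, of g \<alpha>] ga s0 by simp
    then obtain i where i: "i < m" "poly (h i) (s \<alpha>) = 0"
      by (auto simp: g_def poly_prod)
    hence sa: "s \<alpha> = \<alpha> ^ (q ^ i)" by (simp add: h_def)
    have "s x = x ^ (q ^ i)" for x
    proof (cases "x = 0")
      case True thus ?thesis using s0 q2 by simp
    next
      case False
      then obtain j where "x = \<alpha> ^ j" using gen by blast
      thus ?thesis using rhom_power[OF rs] sa by (simp add: power_mult[symmetric] mult.commute)
    qed
    thus ?thesis using i by blast
  qed
  have "{s. fieldaut K s} = (\<lambda>i. (\<lambda>x::'a. x ^ (q ^ i))) ` {..<m}"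
    using upper fr_aut by auto
  thus ?thesis using card_image[OF fr_distinct] by simp
qed


theorem theorem2:
  fixes K :: "'a::{field,finite} set" and q m :: nat
  assumes "is_subfield K" and "card K = q" and "card (UNIV :: 'a set) = q ^ m"
  shows "card {phi :: 'a \<Rightarrow> 'a. lin_aut K phi \<and> fully_linear phi} = m * (q ^ m - 1)"
proof -
  let ?S = "{phi :: 'a \<Rightarrow> 'a. lin_aut K phi \<and> fully_linear phi}"
  let ?G = "{s. fieldaut K s}"
  let ?f = "\<lambda>(c::'a, s::'a \<Rightarrow> 'a). (\<lambda>x. c * s x)"
  have eq: "?S = ?f ` ((UNIV - {0}) \<times> ?G)"
  proof
    show "?S \<subseteq> ?f ` ((UNIV - {0}) \<times> ?G)"
    proof
      fix phi assume "phi \<in> ?S"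
      then obtain c s where "c \<noteq> 0" "fieldaut K s" "phi = (\<lambda>x. c * s x)"
        using full_imp_form[OF _ _ assms(1)] by blast
      thus "phi \<in> ?f ` ((UNIV - {0}) \<times> ?G)" by (auto intro!: image_eqI[of _ _ "(c,s)"])
    qed
    show "?f ` ((UNIV - {0}) \<times> ?G) \<subseteq> ?S"
      using form_imp_full by auto
  qed
  have inj: "inj_on ?f ((UNIV - {0}) \<times> ?G)"
  proof (rule inj_onI)
    fix a b assume ha: "a \<in> (UNIV - {0}) \<times> ?G" "b \<in> (UNIV - {0}) \<times> ?G" "?f a = ?f b"
    obtain c s where a: "a = (c,s)" by (cases a)
    obtain c' s' where b: "b = (c',s')" by (cases b)
    have h: "c \<noteq> 0" "fieldaut K s" "c' \<noteq> 0" "fieldaut K s'" "(\<lambda>x. c * s x) = (\<lambda>x. c' * s' x)"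
      using ha a b by auto
    have "s 1 = 1" "s' 1 = 1" using fieldaut_rhom[OF h(2)] fieldaut_rhom[OF h(4)] by (auto simp: rhom_def)
    moreover have "c * s 1 = c' * s' 1" using h(5) by metis
    ultimately have cc: "c = c'" by simp
    have "s = s'"
    proof
      fix x have "c * s x = c' * s' x" using h(5) by metis
      thus "s x = s' x" using cc h(1) by simp
    qed
    thus "a = b" using cc a b by simp
  qed
  have "card ?S = card (UNIV - {0::'a}) * card ?G"
    using eq card_image[OF inj] by (simp add: card_cartesian_product)
  also have "card (UNIV - {0::'a}) = q ^ m - 1" using assms(3) by (simp add: card_Diff_singleton)
  also have "card ?G = m" by (rule count_aut[OF assms])
  finally show ?thesis by simp
qed

end
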